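(* Let $d\ge1$, $R_y>0$, $\sigma>0$. Define $t_1(\boldsymbol x)=\boldsymbol x$ and $t_2(\boldsymbol x)\in\mathbb{R}^{d_2}$ as the vector with entries $x_i^2$ ($1\le i\le d$) and $\sqrt2\,x_ix_j$ ($1\le i<j\le d$), $d_2=d(d+1)/2$. For records $(\boldsymbol x,y)$ with $\|\boldsymbol x\|_2\le 1$ and $y$ a nonnegative integer with $y\le R_y$, consider $\mathcal M(\boldsymbol x,y)=\big(t_1(\boldsymbol x),t_2(\boldsymbol x),y\,t_1(\boldsymbol x),y\,t_2(\boldsymbol x)\big)+\mathcal N(0,\sigma^2 I)$. Then the optimal $(\epsilon,\delta)$-DP guarantee for $\mathcal M$ (with respect to replacing one record by another satisfying the same constraints) is obtained by considering the Gaussian mechanism with noise variance $\sigma^2$ and $L_2$-sensitivity $\Delta=\sqrt{4\tfrac12\,(1+R_y^2)}=\sqrt{\tfrac92(1+R_y^2)}$; i.e., $\mathcal M$ is $(\epsilon,\delta)$-DP whenever $\Phi(\frac{\Delta}{2\sigma}-\frac{\epsilon\sigma}{\Delta})-e^{\epsilon}\Phi(-\frac{\Delta}{2\sigma}-\frac{\epsilon\sigma}{\Delta})\le\delta$.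
   Context: A randomized mechanism $\mathcal M$ is $(\epsilon,\delta)$-DP if for all neighbouring inputs $D\sim D'$ (differing by replacement of one record) and all measurable $O$, $\Pr[\mathcal M(D)\in O]\le e^{\epsilon}\Pr[\mathcal M(D')\in O]+\delta$. The Gaussian mechanism with $L_2$-sensitivity $\Delta$ and noise $\mathcal N(0,\sigma^2 I)$ is $(\epsilon,\delta)$-DP iff $\Phi(\frac{\Delta}{2\sigma}-\frac{\epsilon\sigma}{\Delta})-e^{\epsilon}\Phi(-\frac{\Delta}{2\sigma}-\frac{\epsilon\sigma}{\Delta})\le\delta$, $\Phi$ the standard normal CDF. *)

theory Defs
  imports "HOL-Probability.Probability"
begin

text \<open>Feature maps. A point x of R^d is a function nat => real whose
coordinates 0..d-1 are used.\<close>

definition t1 :: "nat \<Rightarrow> (nat \<Rightarrow> real) \<Rightarrow> real list" where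
  "t1 d x = map x [0..<d]"

definition t2 :: "nat \<Rightarrow> (nat \<Rightarrow> real) \<Rightarrow> real list" where
  "t2 d x = concat (map (\<lambda>i. map (\<lambda>j. if i = j then (x i)\<^sup>2 else sqrt 2 * x i * x j) [i..<d]) [0..<d])"

definition feature :: "nat \<Rightarrow> (nat \<Rightarrow> real) \<Rightarrow> real \<Rightarrow> real list" where
  "feature d x y = t1 d x @ t2 d x @ map (\<lambda>v. y * v) (t1 d x) @ map (\<lambda>v. y * v) (t2 d x)"

definition gauss_mech :: "real \<Rightarrow> real list \<Rightarrow> (nat \<Rightarrow> real) measure" where
  "gauss_mech \<sigma> v =
     distr (PiM {..<length v} (\<lambda>_. density lborel (normal_density 0 \<sigma>)))
           (PiM {..<length v} (\<lambda>_. borel))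
           (\<lambda>z. \<lambda>i\<in>{..<length v}. v ! i + z i)"

text \<open>(eps,delta)-DP for a mechanism whose input is a single record from Rec;
neighbouring inputs = any two records of Rec (replacement of the record).\<close>
definition DP :: "'a set \<Rightarrow> ('a \<Rightarrow> 'b measure) \<Rightarrow> real \<Rightarrow> real \<Rightarrow> bool" where
  "DP Rec M \<epsilon> \<delta> \<longleftrightarrow>
     (\<forall>D\<in>Rec. \<forall>D'\<in>Rec. \<forall>S\<in>sets (M D).
        measure (M D) S \<le> exp \<epsilon> * measure (M D') S + \<delta>)"

definition Phi :: "real \<Rightarrow> real" where
  "Phi t = (LBINT u:{..t}. std_normal_density u)"

definition records :: "nat \<Rightarrow> real \<Rightarrow> ((nat \<Rightarrow> real) \<times> real) set" where
  "records d Ry = {(x, y). sqrt (\<Sum>i<d. (x i)\<^sup>2) \<le> 1 \<and> y \<in> \<nat> \<and> y \<le> Ry}"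

end

theory Submission
  imports Defs
begin


lemma std_int: "integrable lborel std_normal_density" by simp

lemma set_int_std: "A \<in> sets lborel \<Longrightarrow> set_integrable lborel A std_normal_density"
  unfolding set_integrable_def by (intro integrable_mult_indicator) auto

lemma Phi_split:
  assumes "a \<le> u"
  shows "Phi u = Phi a + (LBINT y=a..u. std_normal_density y)"
proof -
  have "{..u} = {..a} \<union> {a<..u}" using assms by auto
  then have "Phi u = (LBINT y:{..a} \<union> {a<..u}. std_normal_density y)" by (simp add: Phi_def)
  also have "\<dots> = Phi a + (LBINT y:{a<..u}. std_normal_density y)"
    unfolding Phi_def by (subst set_integral_Un) (auto intro!: set_int_std)
  finally show ?thesis using assms by (simp add: interval_integral_Ioc)
qed

lemma Phi_deriv: "(Phi has_real_derivative std_normal_density x) (at x)"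
proof -
  define a b where "a = x - 1" and "b = x + 1"
  have c: "continuous_on {a..b} std_normal_density"
    unfolding normal_density_def by (intro continuous_intros) auto
  have "((\<lambda>u. LBINT y=a..u. std_normal_density y) has_vector_derivative std_normal_density x) (at x within {a..b})"
    by (rule interval_integral_FTC2[OF _ _ c]) (auto simp: a_def b_def)
  then have "((\<lambda>u. Phi a + (LBINT y=a..u. std_normal_density y)) has_vector_derivative std_normal_density x) (at x within {a..b})"
    by (auto intro!: derivative_eq_intros)
  then have "(Phi has_vector_derivative std_normal_density x) (at x within {a..b})"
    by (rule has_vector_derivative_weaken[where S="{a..b}"]) (auto simp: a_def b_def Phi_split)
  then have "(Phi has_vector_derivative std_normal_density x) (at x within {a<..<b})"
    by (rule has_vector_derivative_within_subset) auto
  then have "(Phi has_vector_derivative std_normal_density x) (at x)"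
    by (subst (asm) has_vector_derivative_within_open) (auto simp: a_def b_def)
  then show ?thesis by (simp add: has_real_derivative_iff_has_vector_derivative)
qed



definition gf :: "real \<Rightarrow> real \<Rightarrow> real \<Rightarrow> real" where
  "gf \<epsilon> \<sigma> r = Phi (r / (2*\<sigma>) - \<epsilon> * \<sigma> / r) - exp \<epsilon> * Phi (- r / (2*\<sigma>) - \<epsilon> * \<sigma> / r)"

lemma gf_mono:
  assumes "\<sigma> > 0" "0 < r" "r \<le> D"
  shows "gf \<epsilon> \<sigma> r \<le> gf \<epsilon> \<sigma> D"
proof (rule DERIV_nonneg_imp_nondecreasing[OF assms(3)])
  fix x assume x: "r \<le> x" "x \<le> D"
  then have xp: "x > 0" using assms by auto
  define a where "a = x / (2*\<sigma>) - \<epsilon> * \<sigma> / x"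
  define b where "b = - x / (2*\<sigma>) - \<epsilon> * \<sigma> / x"
  have d: "(gf \<epsilon> \<sigma> has_real_derivative
     std_normal_density a * (1/(2*\<sigma>) + \<epsilon>*\<sigma>/x\<^sup>2) - exp \<epsilon> * (std_normal_density b * (-1/(2*\<sigma>) + \<epsilon>*\<sigma>/x\<^sup>2))) (at x)"
    unfolding gf_def a_def b_def using xp assms
    by (auto intro!: derivative_eq_intros DERIV_chain2[OF Phi_deriv] simp: power2_eq_square field_simps)
  have "b\<^sup>2 - a\<^sup>2 = 2 * \<epsilon>" unfolding a_def b_def using xp assms
    by (simp add: power2_eq_square field_simps)
  then have e: "\<epsilon> + - b\<^sup>2 / 2 = - a\<^sup>2 / 2" by simp
  have "exp \<epsilon> * exp (- b\<^sup>2 / 2) = exp (- a\<^sup>2 / 2)" by (simp only: mult_exp_exp e)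
  then have "std_normal_density a = exp \<epsilon> * std_normal_density b"
    by (metis (no_types) mult.left_commute std_normal_density_def)
  then have "std_normal_density a * (1/(2*\<sigma>) + \<epsilon>*\<sigma>/x\<^sup>2) - exp \<epsilon> * (std_normal_density b * (-1/(2*\<sigma>) + \<epsilon>*\<sigma>/x\<^sup>2))
     = std_normal_density a / \<sigma>" using assms by (simp add: field_simps)
  also have "\<dots> \<ge> 0" using assms by simp
  finally have "0 \<le> std_normal_density a * (1/(2*\<sigma>) + \<epsilon>*\<sigma>/x\<^sup>2) - exp \<epsilon> * (std_normal_density b * (-1/(2*\<sigma>) + \<epsilon>*\<sigma>/x\<^sup>2))" .
  with d show "\<exists>y. DERIV (gf \<epsilon> \<sigma>) x :> y \<and> y \<ge> 0" by blast
qed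



definition PL :: "real list \<Rightarrow> real list \<Rightarrow> real" where
  "PL l m = sum_list (map (\<lambda>(a,b). a*b) (zip l m))"

definition D2 :: "real list \<Rightarrow> real list \<Rightarrow> real" where
  "D2 l m = sum_list (map (\<lambda>(a,b). (a-b)\<^sup>2) (zip l m))"

lemma D2_append: "length l1 = length m1 \<Longrightarrow> D2 (l1 @ l2) (m1 @ m2) = D2 l1 m1 + D2 l2 m2"
  by (simp add: D2_def)

lemma D2_PL: "length l = length m \<Longrightarrow> D2 l m = PL l l + PL m m - 2 * PL l m"
proof (induction l arbitrary: m)
  case Nil then show ?case by (simp add: D2_def PL_def)
next
  case (Cons a l) then show ?case
    by (cases m) (auto simp: D2_def PL_def power2_eq_square algebra_simps)
qed

lemma PL_scale: "PL (map (\<lambda>v. y * v) l) (map (\<lambda>v. z * v) m) = y * z * PL l m"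
proof (induction l arbitrary: m)
  case Nil then show ?case by (simp add: PL_def)
next
  case (Cons a l) then show ?case
    by (cases m) (auto simp: PL_def algebra_simps)
qed

lemma PL_t1: "PL (t1 d x) (t1 d x') = (\<Sum>i<d. x i * x' i)"
proof -
  have "zip (map x [0..<d]) (map x' [0..<d]) = map (\<lambda>i. (x i, x' i)) [0..<d]"
    by (simp add: zip_map_map zip_same_conv_map)
  then show ?thesis
    by (simp add: PL_def t1_def sum_set_upt_conv_sum_list_nat[symmetric] atLeast0LessThan comp_def)
qed

lemma PL_concat: "(\<And>i. i \<in> set L \<Longrightarrow> length (f i) = length (g i)) \<Longrightarrow>
   PL (concat (map f L)) (concat (map g L)) = (\<Sum>i\<leftarrow>L. PL (f i) (g i))"
  by (induction L) (auto simp: PL_def)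

lemma PL_map: "PL (map f R) (map g R) = (\<Sum>j\<leftarrow>R. f j * g j)"
  by (induction R) (auto simp: PL_def)

lemma sq_sum_tri:
  fixes a :: "nat \<Rightarrow> real"
  shows "(\<Sum>i<d. \<Sum>j\<in>{i..<d}. (if i = j then a i * a j else 2 * a i * a j)) = (\<Sum>i<d. a i)\<^sup>2"
proof (induction d)
  case 0 then show ?case by simp
next
  case (Suc d)
  have "(\<Sum>i<Suc d. \<Sum>j\<in>{i..<Suc d}. (if i = j then a i * a j else 2 * a i * a j))
     = (\<Sum>i<Suc d. (\<Sum>j\<in>{i..<d}. (if i = j then a i * a j else 2 * a i * a j))
         + (if i = d then a i * a d else 2 * a i * a d))"
    by (intro sum.cong refl) (auto simp: atLeastLessThanSuc)
  also have "\<dots> = (\<Sum>i<d. a i)\<^sup>2 + (\<Sum>i<d. 2 * a i * a d) + a d * a d"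
    using Suc by (simp add: sum.distrib)
  also have "\<dots> = (\<Sum>i<Suc d. a i)\<^sup>2"
    by (simp add: power2_eq_square algebra_simps sum_distrib_left sum_distrib_right)
  finally show ?case .
qed

lemma PL_t2: "PL (t2 d x) (t2 d x') = (\<Sum>i<d. x i * x' i)\<^sup>2"
proof -
  have "PL (t2 d x) (t2 d x') = (\<Sum>i\<leftarrow>[0..<d]. \<Sum>j\<leftarrow>[i..<d].
      (if i = j then (x i)\<^sup>2 else sqrt 2 * x i * x j) * (if i = j then (x' i)\<^sup>2 else sqrt 2 * x' i * x' j))"
    unfolding t2_def by (subst PL_concat) (auto simp: PL_map)
  also have "\<dots> = (\<Sum>i<d. \<Sum>j\<in>{i..<d}. (if i = j then (x i * x' i) * (x j * x' j) else 2 * (x i * x' i) * (x j * x' j)))"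
    by (simp add: sum_set_upt_conv_sum_list_nat[symmetric] atLeast0LessThan power2_eq_square
        cong: if_cong) (auto intro!: sum.cong simp: algebra_simps)
  also have "\<dots> = (\<Sum>i<d. x i * x' i)\<^sup>2"
    by (rule sq_sum_tri)
  finally show ?thesis .
qed

lemma len_t2: "length (t2 d x) = length (t2 d x')"
  by (simp add: t2_def length_concat comp_def)

lemma len_feature: "length (feature d x y) = length (feature d x' y')"
  by (simp add: feature_def t1_def len_t2[of d x x'])

lemma D2_nth: "length l = length m \<Longrightarrow> D2 l m = (\<Sum>i<length l. (l!i - m!i)\<^sup>2)"
  by (simp add: D2_def sum_list_sum_nth atLeast0LessThan)

lemma ineq_core:
  fixes a b c y y' R :: real
  assumes "0 \<le> a" "a \<le> 1" "0 \<le> b" "b \<le> 1" "0 \<le> y" "y \<le> R" "0 \<le> y'" "y' \<le> R"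
  shows "(a + a\<^sup>2 + b + b\<^sup>2 - 2*c - 2*c\<^sup>2) + (y*y*(a + a\<^sup>2) + y'*y'*(b + b\<^sup>2) - 2*(y*y')*(c + c\<^sup>2))
     \<le> 9/2 * (1 + R\<^sup>2)"
proof -
  have "0 \<le> (c + 1/2)\<^sup>2" by simp
  then have s: "- 2 * (c + c\<^sup>2) \<le> 1/2" by (simp add: power2_eq_square algebra_simps)
  have "a\<^sup>2 \<le> 1" "b\<^sup>2 \<le> 1" using assms by (auto intro: power_le_one)
  then have A: "a + a\<^sup>2 \<le> 2" "b + b\<^sup>2 \<le> 2" using assms by auto
  have A0: "0 \<le> a + a\<^sup>2" "0 \<le> b + b\<^sup>2" using assms by auto
  have yy: "y*y \<le> R\<^sup>2" "y'*y' \<le> R\<^sup>2" "y*y' \<le> R\<^sup>2" "0 \<le> y*y'"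
    using assms by (auto simp: power2_eq_square intro: mult_mono)
  have "y*y*(a + a\<^sup>2) \<le> R\<^sup>2 * 2" using A(1) A0(1) yy(1) assms by (intro mult_mono) auto
  moreover have "y'*y'*(b + b\<^sup>2) \<le> R\<^sup>2 * 2" using A(2) A0(2) yy(2) assms by (intro mult_mono) auto
  moreover have "- 2*(y*y')*(c + c\<^sup>2) \<le> (y*y') * (1/2)"
    using mult_left_mono[OF s yy(4)] by (simp add: algebra_simps)
  moreover have "(y*y') * (1/2) \<le> R\<^sup>2 * (1/2)" using yy by simp
  ultimately show ?thesis using s A by (simp add: algebra_simps)
qed

lemma sens:
  assumes "(\<Sum>i<d. (x i)\<^sup>2) \<le> 1" "(\<Sum>i<d. (x' i)\<^sup>2) \<le> 1"
    "0 \<le> y" "y \<le> R" "0 \<le> y'" "y' \<le> R"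
  shows "D2 (feature d x y) (feature d x' y') \<le> 9/2 * (1 + R\<^sup>2)"
proof -
  define a where "a = (\<Sum>i<d. x i * x i)"
  define b where "b = (\<Sum>i<d. x' i * x' i)"
  define c where "c = (\<Sum>i<d. x i * x' i)"
  have l1: "length (t1 d x) = length (t1 d x')" by (simp add: t1_def)
  have "D2 (feature d x y) (feature d x' y') =
     D2 (t1 d x) (t1 d x') + D2 (t2 d x) (t2 d x') + D2 (map (\<lambda>v. y * v) (t1 d x)) (map (\<lambda>v. y' * v) (t1 d x'))
     + D2 (map (\<lambda>v. y * v) (t2 d x)) (map (\<lambda>v. y' * v) (t2 d x'))"
    unfolding feature_def using l1 len_t2[of d x x']
    by (simp add: D2_append)
  also have "\<dots> = (a + a\<^sup>2 + b + b\<^sup>2 - 2*c - 2*c\<^sup>2) + (y*y*(a + a\<^sup>2) + y'*y'*(b + b\<^sup>2) - 2*(y*y')*(c + c\<^sup>2))"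
    using l1 len_t2[of d x x']
    by (simp add: D2_PL PL_scale PL_t1 PL_t2) (simp add: a_def b_def c_def algebra_simps power2_eq_square)
  also have "\<dots> \<le> 9/2 * (1 + R\<^sup>2)"
    by (rule ineq_core) (use assms in \<open>auto simp: a_def b_def power2_eq_square intro: sum_nonneg\<close>)
  finally show ?thesis .
qed



abbreviation Nn :: "real \<Rightarrow> real \<Rightarrow> real measure" where
  "Nn \<sigma> c \<equiv> density lborel (normal_density c \<sigma>)"

lemma prod_normal_density:
  fixes c :: "'i \<Rightarrow> real"
  assumes I: "finite I" and sp: "\<sigma> > 0"
  shows "PiM I (\<lambda>i. Nn \<sigma> (c i)) =
     density (PiM I (\<lambda>_. lborel)) (\<lambda>x. ennreal (\<Prod>i\<in>I. normal_density (c i) \<sigma> (x i)))"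
proof -
  interpret P: product_sigma_finite "\<lambda>i. Nn \<sigma> (c i)"
    unfolding product_sigma_finite_def
    using prob_space_normal_density[OF sp] prob_space_imp_sigma_finite by blast
  interpret L: product_sigma_finite "\<lambda>_::'i. lborel :: real measure"
    unfolding product_sigma_finite_def by (simp add: lborel.sigma_finite_measure_axioms)
  show ?thesis
  proof (rule P.PiM_eqI[symmetric, OF I])
    show "sets (density (PiM I (\<lambda>_. lborel)) (\<lambda>x. ennreal (\<Prod>i\<in>I. normal_density (c i) \<sigma> (x i))))
       = sets (PiM I (\<lambda>i. Nn \<sigma> (c i)))"
      by (simp cong: sets_PiM_cong)
    fix A assume A: "\<And>i. i \<in> I \<Longrightarrow> A i \<in> sets (Nn \<sigma> (c i))"
    have "emeasure (density (PiM I (\<lambda>_. lborel)) (\<lambda>x. ennreal (\<Prod>i\<in>I. normal_density (c i) \<sigma> (x i)))) (Pi\<^sub>E I A)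
      = (\<integral>\<^sup>+x. ennreal (\<Prod>i\<in>I. normal_density (c i) \<sigma> (x i)) * indicator (Pi\<^sub>E I A) x \<partial>PiM I (\<lambda>_. lborel))"
      using A by (subst emeasure_density) (auto intro!: sets_PiM_I_finite I)
    also have "\<dots> = (\<integral>\<^sup>+x. (\<Prod>i\<in>I. ennreal (normal_density (c i) \<sigma> (x i)) * indicator (A i) (x i)) \<partial>PiM I (\<lambda>_. lborel))"
    proof (rule nn_integral_cong)
      fix x assume "x \<in> space (PiM I (\<lambda>_. lborel :: real measure))"
      then have x: "x \<in> extensional I" by (simp add: space_PiM PiE_def)
      have "indicator (Pi\<^sub>E I A) x = (\<Prod>i\<in>I. indicator (A i) (x i) :: ennreal)"
        using x I by (auto simp: indicator_def PiE_def Pi_def)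
      then show "ennreal (\<Prod>i\<in>I. normal_density (c i) \<sigma> (x i)) * indicator (Pi\<^sub>E I A) x =
         (\<Prod>i\<in>I. ennreal (normal_density (c i) \<sigma> (x i)) * indicator (A i) (x i))"
        by (simp add: prod.distrib prod_ennreal)
    qed
    also have "\<dots> = (\<Prod>i\<in>I. \<integral>\<^sup>+t. ennreal (normal_density (c i) \<sigma> t) * indicator (A i) t \<partial>lborel)"
      using A by (subst L.product_nn_integral_prod) (auto simp: I)
    also have "\<dots> = (\<Prod>i\<in>I. emeasure (Nn \<sigma> (c i)) (A i))"
      using A by (intro prod.cong refl) (simp add: emeasure_density)
    finally show "emeasure (density (PiM I (\<lambda>_. lborel)) (\<lambda>x. ennreal (\<Prod>i\<in>I. normal_density (c i) \<sigma> (x i)))) (Pi\<^sub>E I A)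
       = (\<Prod>i\<in>I. emeasure (Nn \<sigma> (c i)) (A i))" .
  qed
qed

lemma Nn_shift:
  assumes sp: "\<sigma> > 0"
  shows "distr (Nn \<sigma> 0) lborel (\<lambda>x. c + x) = Nn \<sigma> c"
proof -
  interpret prob_space "Nn \<sigma> 0" by (rule prob_space_normal_density[OF sp])
  have "distributed (Nn \<sigma> 0) lborel (\<lambda>x. x) (normal_density 0 \<sigma>)"
    unfolding distributed_def by (simp add: distr_id2)
  from normal_density_affine[OF this sp, of 1 c]
  show ?thesis by (simp add: distributed_def)
qed

lemma Nn_shift_emeasure:
  assumes sp: "\<sigma> > 0" and B: "B \<in> sets borel"
  shows "emeasure (Nn \<sigma> 0) {z. c + z \<in> B} = emeasure (Nn \<sigma> c) B"
proof -
  have "emeasure (Nn \<sigma> c) B = emeasure (distr (Nn \<sigma> 0) lborel (\<lambda>x. c + x)) B"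
    by (simp add: Nn_shift[OF sp])
  also have "\<dots> = emeasure (Nn \<sigma> 0) ((\<lambda>x. c + x) -` B \<inter> space (Nn \<sigma> 0))"
    using B by (subst emeasure_distr) auto
  finally show ?thesis by (simp add: vimage_def)
qed

lemma gauss_mech_prod:
  assumes sp: "\<sigma> > 0"
  shows "gauss_mech \<sigma> v = PiM {..<length v} (\<lambda>i. Nn \<sigma> (v!i))"
proof -
  let ?I = "{..<length v}"
  interpret P: product_sigma_finite "\<lambda>i. Nn \<sigma> (v!i)"
    unfolding product_sigma_finite_def
    using prob_space_normal_density[OF sp] prob_space_imp_sigma_finite by blast
  interpret Z: product_sigma_finite "\<lambda>i::nat. Nn \<sigma> 0"
    unfolding product_sigma_finite_def
    using prob_space_normal_density[OF sp] prob_space_imp_sigma_finite by blast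
  have meas: "(\<lambda>z. \<lambda>i\<in>?I. v ! i + z i) \<in> measurable (PiM ?I (\<lambda>_. Nn \<sigma> 0)) (PiM ?I (\<lambda>_. borel))"
    by measurable
  show ?thesis unfolding gauss_mech_def
  proof (rule P.PiM_eqI)
    show "sets (distr (PiM ?I (\<lambda>_. Nn \<sigma> 0)) (PiM ?I (\<lambda>_. borel)) (\<lambda>z. \<lambda>i\<in>?I. v ! i + z i))
       = sets (PiM ?I (\<lambda>i. Nn \<sigma> (v!i)))"
      by (simp cong: sets_PiM_cong)
    fix A assume A: "\<And>i. i \<in> ?I \<Longrightarrow> A i \<in> sets (Nn \<sigma> (v!i))"
    have "emeasure (distr (PiM ?I (\<lambda>_. Nn \<sigma> 0)) (PiM ?I (\<lambda>_. borel)) (\<lambda>z. \<lambda>i\<in>?I. v ! i + z i)) (Pi\<^sub>E ?I A)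
       = emeasure (PiM ?I (\<lambda>_. Nn \<sigma> 0)) ((\<lambda>z. \<lambda>i\<in>?I. v ! i + z i) -` (Pi\<^sub>E ?I A) \<inter> space (PiM ?I (\<lambda>_. Nn \<sigma> 0)))"
      using A by (subst emeasure_distr[OF meas]) (auto intro!: sets_PiM_I_finite)
    also have "(\<lambda>z. \<lambda>i\<in>?I. v ! i + z i) -` (Pi\<^sub>E ?I A) \<inter> space (PiM ?I (\<lambda>_. Nn \<sigma> 0))
       = Pi\<^sub>E ?I (\<lambda>i. {z. v!i + z \<in> A i})"
      by (auto simp: space_PiM PiE_def Pi_def extensional_def)
    also have "emeasure (PiM ?I (\<lambda>_. Nn \<sigma> 0)) (Pi\<^sub>E ?I (\<lambda>i. {z. v!i + z \<in> A i}))
       = (\<Prod>i\<in>?I. emeasure (Nn \<sigma> 0) {z. v!i + z \<in> A i})"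
      using A by (subst Z.emeasure_PiM) auto
    also have "\<dots> = (\<Prod>i\<in>?I. emeasure (Nn \<sigma> (v!i)) (A i))"
      using A by (intro prod.cong refl Nn_shift_emeasure[OF sp]) auto
    finally show "emeasure (distr (PiM ?I (\<lambda>_. Nn \<sigma> 0)) (PiM ?I (\<lambda>_. borel)) (\<lambda>z. \<lambda>i\<in>?I. v ! i + z i)) (Pi\<^sub>E ?I A)
       = (\<Prod>i\<in>?I. emeasure (Nn \<sigma> (v!i)) (A i))" .
  qed simp
qed



lemma measure_density_real:
  assumes f: "integrable M f" and nn: "\<And>x. 0 \<le> f x" and A: "A \<in> sets M"
  shows "measure (density M (\<lambda>x. ennreal (f x))) A = (\<integral>x. indicator A x * f x \<partial>M)"
proof -
  have fm[measurable]: "f \<in> borel_measurable M" using f by auto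
  have i: "integrable M (\<lambda>x. indicator A x * f x)"
    using integrable_mult_indicator[OF A f] by simp
  have "emeasure (density M (\<lambda>x. ennreal (f x))) A = (\<integral>\<^sup>+x. ennreal (indicator A x * f x) \<partial>M)"
    using A by (subst emeasure_density) (auto intro!: nn_integral_cong simp: indicator_def)
  also have "\<dots> = ennreal (\<integral>x. indicator A x * f x \<partial>M)"
    using i nn by (intro nn_integral_eq_integral) auto
  finally show ?thesis
    using nn by (simp add: measure_def integral_nonneg_AE)
qed

lemma Phi_measure: "measure (density lborel std_normal_density) {..<k} = Phi k"
proof -
  have "measure (density lborel std_normal_density) {..<k} = (\<integral>x. indicator {..<k} x * std_normal_density x \<partial>lborel)"
    by (rule measure_density_real) auto
  also have "\<dots> = (LBINT x:{..<k}. std_normal_density x)"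
    by (simp add: set_lebesgue_integral_def)
  also have "\<dots> = (LBINT x:{..k}. std_normal_density x)"
    by (rule set_integral_discrete_difference[where X="{k}"]) auto
  finally show ?thesis by (simp add: Phi_def)
qed

lemma halfspace:
  fixes c u :: "nat \<Rightarrow> real"
  assumes sp: "\<sigma> > 0" and rp: "0 < (\<Sum>i<n. (u i)\<^sup>2)"
  shows "measure (PiM {..<n} (\<lambda>i. Nn \<sigma> (c i)))
      {x \<in> space (PiM {..<n} (\<lambda>i. Nn \<sigma> (c i))). t < (\<Sum>i<n. u i * x i)}
     = Phi (((\<Sum>i<n. u i * c i) - t) / (\<sigma> * sqrt (\<Sum>i<n. (u i)\<^sup>2)))"
proof -
  define I where "I = {..<n}"
  define M where "M = PiM I (\<lambda>i. Nn \<sigma> (c i))"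
  interpret M: prob_space M unfolding M_def
    by (rule prob_space_PiM) (rule prob_space_normal_density[OF sp])
  have In: "I \<noteq> {}" using rp by (auto simp: I_def)
  have comp: "distr M N (\<lambda>x. x i) = Nn \<sigma> (c i)" if "i \<in> I" "sets N = sets borel" for i N
  proof -
    have "distr M N (\<lambda>x. x i) = distr M (Nn \<sigma> (c i)) (\<lambda>x. x i)"
      by (rule distr_cong) (auto simp: that)
    also have "\<dots> = Nn \<sigma> (c i)" unfolding M_def
      by (rule distr_PiM_component) (auto intro: prob_space_normal_density[OF sp] that)
    finally show ?thesis .
  qed
  have meas[measurable]: "(\<lambda>x. x i) \<in> measurable M borel" if "i \<in> I" for i
    unfolding M_def using that by measurable
  have indep: "M.indep_vars (\<lambda>_. borel) (\<lambda>i x. x i) I"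
  proof (subst M.indep_vars_iff_distr_eq_PiM'[OF In])
    show "(\<lambda>x. x i) \<in> measurable M borel" if "i \<in> I" for i using meas[OF that] .
    have "distr M (PiM I (\<lambda>_. borel)) (\<lambda>x. \<lambda>i\<in>I. x i) = distr M M (\<lambda>x. x)"
      by (rule distr_cong) (auto simp: M_def space_PiM PiE_def extensional_restrict cong: sets_PiM_cong)
    also have "\<dots> = M" by (rule distr_id)
    also have "\<dots> = PiM I (\<lambda>i. distr M borel (\<lambda>x. x i))"
    proof -
      have "PiM I (\<lambda>i. distr M borel (\<lambda>x. x i)) = PiM I (\<lambda>i. Nn \<sigma> (c i))"
        by (rule PiM_cong) (auto simp: comp)
      then show ?thesis by (simp add: M_def)
    qed
    finally show "distr M (PiM I (\<lambda>_. borel)) (\<lambda>x. \<lambda>i\<in>I. x i) = PiM I (\<lambda>i. distr M borel (\<lambda>x. x i))" .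
  qed
  have dist_i: "distributed M lborel (\<lambda>x. x i) (normal_density (c i) \<sigma>)" if "i \<in> I" for i
    unfolding distributed_def using that by (auto simp: comp)
  define J where "J = {i\<in>I. u i \<noteq> 0}"
  have J: "finite J" "J \<noteq> {}" "J \<subseteq> I"
  proof -
    show "finite J" "J \<subseteq> I" by (auto simp: J_def I_def)
    show "J \<noteq> {}"
    proof
      assume "J = {}"
      then have "(\<Sum>i<n. (u i)\<^sup>2) = 0" by (intro sum.neutral) (auto simp: J_def I_def)
      then show False using rp by simp
    qed
  qed
  have aff: "distributed M lborel (\<lambda>x. 0 + u i * x i) (normal_density (0 + u i * c i) (\<bar>u i\<bar> * \<sigma>))"
    if "i \<in> J" for i
    using that J by (intro M.normal_density_affine dist_i sp) (auto simp: J_def)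
  have indJ: "M.indep_vars (\<lambda>_. borel) (\<lambda>i x. 0 + u i * x i) J"
    by (rule M.indep_vars_subset[OF M.indep_vars_compose2[OF indep] J(3)]) auto
  have sum: "distributed M lborel (\<lambda>x. \<Sum>i\<in>J. 0 + u i * x i)
     (normal_density (\<Sum>i\<in>J. 0 + u i * c i) (sqrt (\<Sum>i\<in>J. (\<bar>u i\<bar> * \<sigma>)\<^sup>2)))"
    by (rule M.sum_indep_normal[OF J(1,2) indJ _ aff]) (use sp in \<open>auto simp: J_def\<close>)
  define Y where "Y x = (\<Sum>i<n. u i * x i)" for x :: "nat \<Rightarrow> real"
  define m where "m = (\<Sum>i<n. u i * c i)"
  define s where "s = \<sigma> * sqrt (\<Sum>i<n. (u i)\<^sup>2)"
  have spos: "s > 0" using sp rp by (simp add: s_def)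
  have e1: "(\<Sum>i\<in>J. 0 + u i * x i) = Y x" for x
    unfolding Y_def add_0 by (rule sum.mono_neutral_left) (auto simp: J_def I_def)
  have e2: "(\<Sum>i\<in>J. 0 + u i * c i) = m"
    unfolding m_def add_0 by (rule sum.mono_neutral_left) (auto simp: J_def I_def)
  have "(\<Sum>i\<in>J. (\<bar>u i\<bar> * \<sigma>)\<^sup>2) = \<sigma>\<^sup>2 * (\<Sum>i<n. (u i)\<^sup>2)"
  proof -
    have "(\<Sum>i\<in>J. (\<bar>u i\<bar> * \<sigma>)\<^sup>2) = (\<Sum>i\<in>J. \<sigma>\<^sup>2 * (u i)\<^sup>2)"
      by (simp add: power_mult_distrib mult.commute)
    also have "\<dots> = (\<Sum>i<n. \<sigma>\<^sup>2 * (u i)\<^sup>2)"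
      by (rule sum.mono_neutral_left) (auto simp: J_def I_def)
    finally show ?thesis by (simp add: sum_distrib_left)
  qed
  then have e3: "sqrt (\<Sum>i\<in>J. (\<bar>u i\<bar> * \<sigma>)\<^sup>2) = s"
    using sp by (simp add: s_def real_sqrt_mult)
  have dY: "distributed M lborel Y (normal_density m s)"
    using sum unfolding e2 e1 e3 .
  have dW: "distributed M lborel (\<lambda>x. m/s + (-1/s) * Y x) (normal_density (m/s + (-1/s) * m) (\<bar>-1/s\<bar> * s))"
    by (rule M.normal_density_affine[OF dY spos]) (use spos in auto)
  then have dW': "distr M lborel (\<lambda>x. m/s + (-1/s) * Y x) = density lborel std_normal_density"
    "(\<lambda>x. m/s + (-1/s) * Y x) \<in> measurable M lborel"
    using spos by (auto simp: distributed_def)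
  have set_eq: "{x \<in> space M. t < Y x} = (\<lambda>x. m/s + (-1/s) * Y x) -` {..<(m - t)/s} \<inter> space M"
    using spos by (auto simp: field_simps)
  have "measure M {x \<in> space M. t < Y x} = measure (distr M lborel (\<lambda>x. m/s + (-1/s) * Y x)) {..<(m - t)/s}"
    unfolding set_eq by (rule measure_distr[symmetric, OF dW'(2)]) auto
  also have "\<dots> = Phi ((m - t)/s)" unfolding dW'(1) by (rule Phi_measure)
  finally show ?thesis by (simp add: M_def I_def Y_def m_def s_def)
qed



lemma prod_nd:
  assumes "finite I"
  shows "(\<Prod>i\<in>I. normal_density (c i) \<sigma> (x i)) =
    (1 / sqrt (2*pi*\<sigma>\<^sup>2)) ^ card I * exp (- (\<Sum>i\<in>I. (x i - c i)\<^sup>2) / (2*\<sigma>\<^sup>2))"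
  unfolding normal_density_def prod.distrib using assms
  by (simp add: exp_sum[symmetric] sum_divide_distrib[symmetric] sum_negf)

lemma region:
  fixes n :: nat and v w x :: "nat \<Rightarrow> real"
  assumes sp: "\<sigma> > 0"
  shows "exp \<epsilon> * (\<Prod>i\<in>{..<n}. normal_density (w i) \<sigma> (x i)) < (\<Prod>i\<in>{..<n}. normal_density (v i) \<sigma> (x i))
     \<longleftrightarrow> \<sigma>\<^sup>2 * \<epsilon> + ((\<Sum>i<n. (v i)\<^sup>2) - (\<Sum>i<n. (w i)\<^sup>2)) / 2 < (\<Sum>i<n. (v i - w i) * x i)"
proof -
  define K where "K = (1 / sqrt (2*pi*\<sigma>\<^sup>2)) ^ n"
  have K: "K > 0" using sp by (simp add: K_def)
  define Sv where "Sv = (\<Sum>i<n. (x i - v i)\<^sup>2)"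
  define Sw where "Sw = (\<Sum>i<n. (x i - w i)\<^sup>2)"
  have "exp \<epsilon> * (\<Prod>i\<in>{..<n}. normal_density (w i) \<sigma> (x i)) < (\<Prod>i\<in>{..<n}. normal_density (v i) \<sigma> (x i))
    \<longleftrightarrow> K * exp (\<epsilon> + - Sw / (2*\<sigma>\<^sup>2)) < K * exp (- Sv / (2*\<sigma>\<^sup>2))"
    unfolding mult_exp_exp[symmetric] by (simp add: prod_nd K_def Sv_def Sw_def mult_ac)
  also have "\<dots> \<longleftrightarrow> \<epsilon> + - Sw / (2*\<sigma>\<^sup>2) < - Sv / (2*\<sigma>\<^sup>2)"
    using K by simp
  also have "\<dots> \<longleftrightarrow> 2*\<sigma>\<^sup>2 * \<epsilon> < Sw - Sv"
  proof -
    define k where "k = 2*\<sigma>\<^sup>2"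
    have k: "k > 0" using sp by (simp add: k_def)
    have e: "\<epsilon> + - Sw / k = (k*\<epsilon> - Sw) / k" using k by (simp add: field_simps)
    have "\<epsilon> + - Sw / k < - Sv / k \<longleftrightarrow> k * \<epsilon> < Sw - Sv"
      unfolding e using k by (simp only: divide_less_cancel) auto
    then show ?thesis by (simp add: k_def)
  qed
  also have "Sw - Sv = 2 * (\<Sum>i<n. (v i - w i) * x i) - (\<Sum>i<n. (v i)\<^sup>2) + (\<Sum>i<n. (w i)\<^sup>2)"
    unfolding Sv_def Sw_def sum_subtractf[symmetric] sum_distrib_left sum.distrib[symmetric]
    by (intro sum.cong refl) (simp add: power2_eq_square algebra_simps)
  finally show ?thesis by (simp add: field_simps)
qed



lemma sum_id1:
  fixes v w :: "nat \<Rightarrow> real"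
  shows "(\<Sum>i<n. (v i - w i) * v i) - ((\<Sum>i<n. (v i)\<^sup>2) - (\<Sum>i<n. (w i)\<^sup>2)) / 2 = (\<Sum>i<n. (v i - w i)\<^sup>2) / 2"
proof -
  have "(\<Sum>i<n. (v i - w i) * v i) - ((\<Sum>i<n. (v i)\<^sup>2) - (\<Sum>i<n. (w i)\<^sup>2)) / 2
     = (\<Sum>i<n. (v i - w i) * v i - ((v i)\<^sup>2 - (w i)\<^sup>2) / 2)"
    by (simp add: sum_subtractf sum_divide_distrib[symmetric])
  also have "\<dots> = (\<Sum>i<n. (v i - w i)\<^sup>2 / 2)"
    by (rule sum.cong) (simp_all add: power2_eq_square field_simps)
  finally show ?thesis by (simp add: sum_divide_distrib)
qed

lemma sum_id2:
  fixes v w :: "nat \<Rightarrow> real"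
  shows "(\<Sum>i<n. (v i - w i) * w i) - ((\<Sum>i<n. (v i)\<^sup>2) - (\<Sum>i<n. (w i)\<^sup>2)) / 2 = - (\<Sum>i<n. (v i - w i)\<^sup>2) / 2"
proof -
  have "(\<Sum>i<n. (v i - w i) * w i) - ((\<Sum>i<n. (v i)\<^sup>2) - (\<Sum>i<n. (w i)\<^sup>2)) / 2
     = (\<Sum>i<n. (v i - w i) * w i - ((v i)\<^sup>2 - (w i)\<^sup>2) / 2)"
    by (simp add: sum_subtractf sum_divide_distrib[symmetric])
  also have "\<dots> = (\<Sum>i<n. - ((v i - w i)\<^sup>2 / 2))"
    by (rule sum.cong) (simp_all add: power2_eq_square field_simps)
  finally show ?thesis by (simp add: sum_divide_distrib sum_negf)
qed

lemma gauss_core: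
  fixes v w :: "real list"
  assumes len: "length w = length v" and sp: "\<sigma> > 0"
    and rp: "0 < (\<Sum>i<length v. (v!i - w!i)\<^sup>2)"
    and S: "S \<in> sets (gauss_mech \<sigma> v)"
  shows "measure (gauss_mech \<sigma> v) S - exp \<epsilon> * measure (gauss_mech \<sigma> w) S
     \<le> gf \<epsilon> \<sigma> (sqrt (\<Sum>i<length v. (v!i - w!i)\<^sup>2))"
proof -
  define n where "n = length v"
  define I where "I = {..<n}"
  define L where "L = PiM I (\<lambda>_::nat. lborel :: real measure)"
  define p where "p x = (\<Prod>i\<in>I. normal_density (v!i) \<sigma> (x i))" for x :: "nat \<Rightarrow> real"
  define q where "q x = (\<Prod>i\<in>I. normal_density (w!i) \<sigma> (x i))" for x :: "nat \<Rightarrow> real"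
  have P: "gauss_mech \<sigma> v = density L (\<lambda>x. ennreal (p x))"
    using gauss_mech_prod[OF sp, of v] prod_normal_density[of I \<sigma> "\<lambda>i. v!i"] sp
    by (simp add: L_def p_def I_def n_def)
  have Q: "gauss_mech \<sigma> w = density L (\<lambda>x. ennreal (q x))"
    using gauss_mech_prod[OF sp, of w] prod_normal_density[of I \<sigma> "\<lambda>i. w!i"] sp len
    by (simp add: L_def q_def I_def n_def)
  have pm[measurable]: "p \<in> borel_measurable L" unfolding p_def[abs_def] L_def by measurable
  have qm[measurable]: "q \<in> borel_measurable L" unfolding q_def[abs_def] L_def by measurable
  have pn: "0 \<le> p x" "0 \<le> q x" for x unfolding p_def q_def by (auto intro: prod_nonneg)
  have sL: "sets (gauss_mech \<sigma> v) = sets L" "sets (gauss_mech \<sigma> w) = sets L" using P Q by simp_all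
  have SL: "S \<in> sets L" using S sL by simp
  have pint: "integrable L p"
  proof (rule integrableI_nonneg)
    show "AE x in L. 0 \<le> p x" using pn by simp
    interpret prob_space "gauss_mech \<sigma> v"
      unfolding gauss_mech_prod[OF sp] by (rule prob_space_PiM) (rule prob_space_normal_density[OF sp])
    have "(\<integral>\<^sup>+x. ennreal (p x) \<partial>L) = emeasure (density L (\<lambda>x. ennreal (p x))) (space L)"
      by (subst emeasure_density) (auto intro!: nn_integral_cong)
    also have "\<dots> = 1" using emeasure_space_1 P by simp
    finally show "(\<integral>\<^sup>+x. ennreal (p x) \<partial>L) < \<infinity>" by simp
  qed simp
  have qint: "integrable L q"
  proof (rule integrableI_nonneg)
    show "AE x in L. 0 \<le> q x" using pn by simp
    interpret prob_space "gauss_mech \<sigma> w"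
      unfolding gauss_mech_prod[OF sp] by (rule prob_space_PiM) (rule prob_space_normal_density[OF sp])
    have "(\<integral>\<^sup>+x. ennreal (q x) \<partial>L) = emeasure (density L (\<lambda>x. ennreal (q x))) (space L)"
      by (subst emeasure_density) (auto intro!: nn_integral_cong)
    also have "\<dots> = 1" using emeasure_space_1 Q by simp
    finally show "(\<integral>\<^sup>+x. ennreal (q x) \<partial>L) < \<infinity>" by simp
  qed simp
  have mP: "measure (gauss_mech \<sigma> v) B = (\<integral>x. indicator B x * p x \<partial>L)" if "B \<in> sets L" for B
    unfolding P by (rule measure_density_real[OF pint pn(1) that])
  have mQ: "measure (gauss_mech \<sigma> w) B = (\<integral>x. indicator B x * q x \<partial>L)" if "B \<in> sets L" for B
    unfolding Q by (rule measure_density_real[OF qint pn(2) that])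
  define A where "A = {x \<in> space L. exp \<epsilon> * q x < p x}"
  have AL: "A \<in> sets L" unfolding A_def by measurable
  have ii: "integrable L (\<lambda>x. indicator B x * (p x - exp \<epsilon> * q x))" if "B \<in> sets L" for B
  proof -
    have "integrable L (\<lambda>x. indicator B x *\<^sub>R (p x - exp \<epsilon> * q x))"
      using that pint qint by (intro integrable_mult_indicator) auto
    then show ?thesis by simp
  qed
  have split: "measure (gauss_mech \<sigma> v) B - exp \<epsilon> * measure (gauss_mech \<sigma> w) B
      = (\<integral>x. indicator B x * (p x - exp \<epsilon> * q x) \<partial>L)" if "B \<in> sets L" for B
  proof -
    have i1: "integrable L (\<lambda>x. indicator B x * p x)" using integrable_mult_indicator[OF that pint] by simp
    have i2: "integrable L (\<lambda>x. indicator B x * q x)" using integrable_mult_indicator[OF that qint] by simp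
    have "(\<integral>x. indicator B x * (p x - exp \<epsilon> * q x) \<partial>L)
       = (\<integral>x. indicator B x * p x - exp \<epsilon> * (indicator B x * q x) \<partial>L)"
      by (rule Bochner_Integration.integral_cong) (auto simp: algebra_simps)
    also have "\<dots> = (\<integral>x. indicator B x * p x \<partial>L) - (\<integral>x. exp \<epsilon> * (indicator B x * q x) \<partial>L)"
      using i1 i2 by (intro Bochner_Integration.integral_diff) auto
    also have "(\<integral>x. exp \<epsilon> * (indicator B x * q x) \<partial>L) = exp \<epsilon> * (\<integral>x. indicator B x * q x \<partial>L)"
      by (rule integral_mult_right_zero)
    finally show ?thesis unfolding mP[OF that] mQ[OF that] by simp
  qed
  have main: "measure (gauss_mech \<sigma> v) S - exp \<epsilon> * measure (gauss_mech \<sigma> w) S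
      \<le> measure (gauss_mech \<sigma> v) A - exp \<epsilon> * measure (gauss_mech \<sigma> w) A"
    unfolding split[OF SL] split[OF AL]
  proof (rule integral_mono[OF ii[OF SL] ii[OF AL]])
    fix x assume "x \<in> space L"
    then show "indicator S x * (p x - exp \<epsilon> * q x) \<le> indicator A x * (p x - exp \<epsilon> * q x)"
      by (cases "x \<in> A"; cases "x \<in> S") (auto simp: A_def)
  qed
  define u where "u i = v!i - w!i" for i
  define t0 where "t0 = \<sigma>\<^sup>2*\<epsilon> + ((\<Sum>i<n. (v!i)\<^sup>2) - (\<Sum>i<n. (w!i)\<^sup>2))/2"
  define R where "R = (\<Sum>i<n. (u i)\<^sup>2)"
  have Rp: "0 < R" using rp by (simp add: R_def u_def n_def)
  have A_eq: "A = {x \<in> space (PiM I (\<lambda>i. Nn \<sigma> (c i))). t0 < (\<Sum>i<n. u i * x i)}" for c :: "nat \<Rightarrow> real"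
    unfolding A_def p_def q_def t0_def u_def I_def L_def using region[OF sp]
    by (simp add: space_PiM)
  have mPA: "measure (gauss_mech \<sigma> v) A = Phi ((R/2 - \<sigma>\<^sup>2*\<epsilon>) / (\<sigma> * sqrt R))"
  proof -
    have "measure (gauss_mech \<sigma> v) A = Phi (((\<Sum>i<n. u i * v!i) - t0) / (\<sigma> * sqrt R))"
      unfolding gauss_mech_prod[OF sp] A_eq[of "\<lambda>i. v!i"] R_def n_def[symmetric] I_def
      by (rule halfspace[OF sp]) (use Rp in \<open>simp add: R_def\<close>)
    also have "(\<Sum>i<n. u i * v!i) - t0 = R/2 - \<sigma>\<^sup>2*\<epsilon>"
      using sum_id1[of "\<lambda>i. v!i" "\<lambda>i. w!i" n] by (simp add: u_def t0_def R_def)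
    finally show ?thesis .
  qed
  have mQA: "measure (gauss_mech \<sigma> w) A = Phi ((- R/2 - \<sigma>\<^sup>2*\<epsilon>) / (\<sigma> * sqrt R))"
  proof -
    have "measure (gauss_mech \<sigma> w) A = Phi (((\<Sum>i<n. u i * w!i) - t0) / (\<sigma> * sqrt R))"
      unfolding gauss_mech_prod[OF sp] A_eq[of "\<lambda>i. w!i"] R_def len n_def[symmetric] I_def
      by (rule halfspace[OF sp]) (use Rp in \<open>simp add: R_def\<close>)
    also have "(\<Sum>i<n. u i * w!i) - t0 = - R/2 - \<sigma>\<^sup>2*\<epsilon>"
      using sum_id2[of "\<lambda>i. v!i" "\<lambda>i. w!i" n] by (simp add: u_def t0_def R_def)
    finally show ?thesis .
  qed
  define r where "r = sqrt R"
  have r: "r > 0" "R = r * r" using Rp by (auto simp: r_def)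
  have a1: "(R/2 - \<sigma>\<^sup>2*\<epsilon>) / (\<sigma> * sqrt R) = r / (2*\<sigma>) - \<epsilon> * \<sigma> / r"
    unfolding r_def[symmetric] r(2) using r(1) sp by (simp add: field_simps power2_eq_square)
  have a2: "(- R/2 - \<sigma>\<^sup>2*\<epsilon>) / (\<sigma> * sqrt R) = - r / (2*\<sigma>) - \<epsilon> * \<sigma> / r"
    unfolding r_def[symmetric] r(2) using r(1) sp by (simp add: field_simps power2_eq_square)
  have "sqrt (\<Sum>i<length v. (v!i - w!i)\<^sup>2) = r" by (simp add: r_def R_def u_def n_def)
  then show ?thesis using main unfolding mPA mQA a1 a2 gf_def by simp
qed



lemma gm_prob: "\<sigma> > 0 \<Longrightarrow> prob_space (gauss_mech \<sigma> v)"
  unfolding gauss_mech_prod by (rule prob_space_PiM) (rule prob_space_normal_density)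

lemma gf_lower:
  assumes sp: "\<sigma> > 0" and D: "D > 0"
  shows "0 \<le> gf \<epsilon> \<sigma> D" "1 - exp \<epsilon> \<le> gf \<epsilon> \<sigma> D"
proof -
  have e: "sqrt (\<Sum>i<length [D]. ([D] ! i - [0] ! i)\<^sup>2) = D" using D by simp
  have c: "measure (gauss_mech \<sigma> [D]) S - exp \<epsilon> * measure (gauss_mech \<sigma> [0]) S \<le> gf \<epsilon> \<sigma> D"
    if "S \<in> sets (gauss_mech \<sigma> [D])" for S
    using gauss_core[of "[0]" "[D]" \<sigma> S \<epsilon>] that sp D unfolding e by simp
  show "0 \<le> gf \<epsilon> \<sigma> D" using c[of "{}"] by simp
  interpret p1: prob_space "gauss_mech \<sigma> [D]" by (rule gm_prob[OF sp])
  interpret p2: prob_space "gauss_mech \<sigma> [0]" by (rule gm_prob[OF sp])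
  have sp_eq: "space (gauss_mech \<sigma> [0]) = space (gauss_mech \<sigma> [D])" by (simp add: gauss_mech_def)
  show "1 - exp \<epsilon> \<le> gf \<epsilon> \<sigma> D"
    using c[of "space (gauss_mech \<sigma> [D])"] p1.prob_space p2.prob_space sp_eq by simp
qed

lemma arith_aux:
  fixes m e g :: real
  assumes "0 \<le> m" "m \<le> 1" "0 \<le> g" "1 - e \<le> g"
  shows "m - e * m \<le> g"
proof (cases "e \<le> 1")
  case True
  have "m * (1 - e) \<le> 1 * (1 - e)" using True assms by (intro mult_right_mono) auto
  then show ?thesis using assms by (simp add: algebra_simps)
next
  case False
  have "m * (1 - e) \<le> 0" using False assms by (simp add: mult_nonneg_nonpos)
  then show ?thesis using assms by (simp add: algebra_simps)
qed

theorem corollary2: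
  fixes d :: nat and Ry \<sigma> \<epsilon> \<delta> :: real
  assumes "d \<ge> 1" and "Ry > 0" and "\<sigma> > 0"
    and "Phi (sqrt (9/2 * (1 + Ry\<^sup>2)) / (2 * \<sigma>) - \<epsilon> * \<sigma> / sqrt (9/2 * (1 + Ry\<^sup>2)))
         - exp \<epsilon> * Phi (- sqrt (9/2 * (1 + Ry\<^sup>2)) / (2 * \<sigma>) - \<epsilon> * \<sigma> / sqrt (9/2 * (1 + Ry\<^sup>2)))
         \<le> \<delta>"
  shows "DP (records d Ry) (\<lambda>(x, y). gauss_mech \<sigma> (feature d x y)) \<epsilon> \<delta>"
proof -
  define \<Delta> where "\<Delta> = sqrt (9/2 * (1 + Ry\<^sup>2))"
  have Dp: "\<Delta> > 0" unfolding \<Delta>_def by (simp add: add_pos_nonneg)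
  have gd: "gf \<epsilon> \<sigma> \<Delta> \<le> \<delta>" using assms(4) by (simp add: gf_def \<Delta>_def)
  note low = gf_lower[OF assms(3) Dp, of \<epsilon>]
  show ?thesis unfolding DP_def
  proof (intro ballI)
    fix D D' S assume D: "D \<in> records d Ry" and D': "D' \<in> records d Ry"
    obtain x y where xy: "D = (x, y)" by (cases D)
    obtain x' y' where xy': "D' = (x', y')" by (cases D')
    define v where "v = feature d x y"
    define w where "w = feature d x' y'"
    assume "S \<in> sets ((\<lambda>(x, y). gauss_mech \<sigma> (feature d x y)) D)"
    then have S: "S \<in> sets (gauss_mech \<sigma> v)" by (simp add: xy v_def)
    have len: "length w = length v" unfolding v_def w_def by (rule len_feature)
    have hx: "(\<Sum>i<d. (x i)\<^sup>2) \<le> 1" "0 \<le> y" "y \<le> Ry" using D by (auto simp: xy records_def elim: Nats_cases)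
    have hx': "(\<Sum>i<d. (x' i)\<^sup>2) \<le> 1" "0 \<le> y'" "y' \<le> Ry" using D' by (auto simp: xy' records_def elim: Nats_cases)
    define R where "R = (\<Sum>i<length v. (v!i - w!i)\<^sup>2)"
    have RD: "R \<le> 9/2 * (1 + Ry\<^sup>2)"
      using sens[OF hx(1) hx'(1) hx(2,3) hx'(2,3)] D2_nth[of v w] len
      by (simp add: R_def v_def w_def)
    have R0: "0 \<le> R" unfolding R_def by (auto intro: sum_nonneg)
    have "measure (gauss_mech \<sigma> v) S - exp \<epsilon> * measure (gauss_mech \<sigma> w) S \<le> \<delta>"
    proof (cases "R = 0")
      case False
      then have Rp: "R > 0" using R0 by simp
      have "measure (gauss_mech \<sigma> v) S - exp \<epsilon> * measure (gauss_mech \<sigma> w) S \<le> gf \<epsilon> \<sigma> (sqrt R)"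
        using gauss_core[OF len assms(3) _ S] Rp by (simp add: R_def)
      also have "\<dots> \<le> gf \<epsilon> \<sigma> \<Delta>"
        by (rule gf_mono[OF assms(3)]) (use Rp RD in \<open>auto simp: \<Delta>_def\<close>)
      finally show ?thesis using gd by simp
    next
      case True
      have "\<forall>i\<in>{..<length v}. (v!i - w!i)\<^sup>2 = 0"
        using True unfolding R_def by (subst (asm) sum_nonneg_eq_0_iff) auto
      then have "v = w" using len by (intro nth_equalityI) auto
      interpret prob_space "gauss_mech \<sigma> v" by (rule gm_prob[OF assms(3)])
      have "0 \<le> measure (gauss_mech \<sigma> v) S" "measure (gauss_mech \<sigma> v) S \<le> 1" by auto
      then have "measure (gauss_mech \<sigma> v) S - exp \<epsilon> * measure (gauss_mech \<sigma> w) S \<le> gf \<epsilon> \<sigma> \<Delta>"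
        using low \<open>v = w\<close> arith_aux by simp
      then show ?thesis using gd by simp
    qed
    then show "measure ((\<lambda>(x, y). gauss_mech \<sigma> (feature d x y)) D) S
        \<le> exp \<epsilon> * measure ((\<lambda>(x, y). gauss_mech \<sigma> (feature d x y)) D') S + \<delta>"
      by (simp add: xy xy' v_def w_def)
  qed
qed


end
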